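(* Let $\gamma_1(t)=e^{-\pi t^2}$, $\gamma_2(t)=2\pi t\,e^{-\pi t^2}$ and $\gamma_3(t)=(1-2\pi t)e^{-\pi t^2}$ for $t\in\mathbb{R}$. Let $\varphi,\psi\in L^2(\mathbb{R})$ satisfy $|\mathcal{F}[\gamma_j\varphi](\xi)|=|\mathcal{F}[\gamma_j\psi](\xi)|$ for all $\xi\in\mathbb{R}$ and $j=1,2,3$. Then there exists $c\in\mathbb{C}$ with $|c|=1$ such that $\psi=c\varphi$.
   Context: The Fourier transform is normalized as $\mathcal{F}f(\xi)=\int_{\mathbb{R}}f(x)e^{-2\pi i x\xi}\,dx$ for $f\in L^1(\mathbb{R})$, extended to $L^2(\mathbb{R})$ in the usual way. Equalities of functions in $L^2$ are understood almost everywhere. *)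

theory Defs
  imports "HOL-Analysis.Analysis"
begin

definition square_integrable :: "(real \<Rightarrow> complex) \<Rightarrow> bool" where
  "square_integrable f \<longleftrightarrow>
     f \<in> borel_measurable lebesgue \<and> integrable lebesgue (\<lambda>x. (norm (f x))\<^sup>2)"

definition fourier :: "(real \<Rightarrow> complex) \<Rightarrow> real \<Rightarrow> complex" where
  "fourier f \<xi> = (LINT x|lebesgue. f x * cis (- 2 * pi * x * \<xi>))"

definition gamma1 :: "real \<Rightarrow> real" where
  "gamma1 t = exp (- pi * t\<^sup>2)"

definition gamma2 :: "real \<Rightarrow> real" where
  "gamma2 t = 2 * pi * t * exp (- pi * t\<^sup>2)"

definition gamma3 :: "real \<Rightarrow> real" where
  "gamma3 t = (1 - 2 * pi * t) * exp (- pi * t\<^sup>2)"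

end

theory Submission imports Defs "HOL-Probability.Probability" "HOL-Complex_Analysis.Complex_Analysis" begin

lemma exp_rem_bound:
  fixes w :: complex
  shows "norm (exp w - 1 - w) \<le> norm w ^ 2 * exp (norm w)"
proof -
  have sums: "(\<lambda>k. w ^ (k + 2) /\<^sub>R fact (k + 2)) sums (exp w - (\<Sum>k<2. w ^ k /\<^sub>R fact k))"
    by (intro sums_split_initial_segment exp_converges)
  have eq: "exp w - 1 - w = (\<Sum>k. w ^ (k + 2) /\<^sub>R fact (k + 2))"
    using sums by (simp add: sums_iff eval_nat_numeral)
  have s1: "summable (\<lambda>k. norm (w ^ (k + 2) /\<^sub>R fact (k + 2)))"
    using summable_norm_exp[of w]
    by (intro summable_ignore_initial_segment) 
  have s2: "(\<lambda>k. norm w ^ 2 * (norm w ^ k /\<^sub>R fact k)) sums (norm w ^ 2 * exp (norm w))"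
    by (intro sums_mult exp_converges)
  have "norm (exp w - 1 - w) \<le> (\<Sum>k. norm (w ^ (k + 2) /\<^sub>R fact (k + 2)))"
    unfolding eq using s1 by (rule summable_norm)
  also have "\<dots> \<le> norm w ^ 2 * exp (norm w)"
  proof (rule sums_le[OF _ summable_sums[OF s1] s2])
    fix k
    have "fact k \<le> (fact (k+2) :: real)" by (intro fact_mono) auto
    then have "norm w ^ (k+2) / fact (k + 2) \<le> norm w ^ (k+2) / fact k"
      by (intro divide_left_mono) auto
    then show "norm (w ^ (k + 2) /\<^sub>R fact (k + 2)) \<le> norm w ^ 2 * (norm w ^ k /\<^sub>R fact k)"
      by (simp add: norm_power norm_mult power_add divide_simps mult_ac power2_eq_square)
  qed
  finally show ?thesis .
qed

lemma gauss_weight_sq_int: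
  fixes R :: real and k :: nat
  assumes "R \<ge> 0"
  shows "integrable lborel (\<lambda>x. (exp (- pi * x\<^sup>2) * \<bar>x\<bar> ^ k * exp (2 * pi * R * \<bar>x\<bar>))\<^sup>2)"
proof (rule Bochner_Integration.integrable_bound)
  show "integrable lborel (\<lambda>x. (exp (4 * pi\<^sup>2 * R\<^sup>2) * sqrt (2 * pi)) * (std_normal_density x * \<bar>x\<bar> ^ (2*k)))"
    by (intro integrable_mult_right integrable_std_normal_moment_abs)
  show "(\<lambda>x. (exp (- pi * x\<^sup>2) * \<bar>x\<bar> ^ k * exp (2 * pi * R * \<bar>x\<bar>))\<^sup>2) \<in> borel_measurable lborel"
    by measurable
  show "AE x in lborel. norm ((exp (- pi * x\<^sup>2) * \<bar>x\<bar> ^ k * exp (2 * pi * R * \<bar>x\<bar>))\<^sup>2)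
          \<le> norm ((exp (4 * pi\<^sup>2 * R\<^sup>2) * sqrt (2 * pi)) * (std_normal_density x * \<bar>x\<bar> ^ (2*k)))"
  proof (rule AE_I2)
    fix x :: real
    have sq: "0 \<le> (\<bar>x\<bar> - 2 * pi * R)\<^sup>2" by simp
    have pi3: "pi \<ge> 3" using pi_gt3 by simp
    have xx: "0 \<le> x\<^sup>2" by simp
    have ineq: "- 2 * pi * x\<^sup>2 + 4 * pi * R * \<bar>x\<bar> \<le> 4 * pi\<^sup>2 * R\<^sup>2 + - x\<^sup>2 / 2"
    proof -
      have "(\<bar>x\<bar> - 2 * pi * R)\<^sup>2 = x\<^sup>2 - 4 * pi * R * \<bar>x\<bar> + 4 * pi\<^sup>2 * R\<^sup>2"
        by (simp add: power2_eq_square algebra_simps)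
      moreover have "2 * pi * x\<^sup>2 \<ge> 3/2 * x\<^sup>2" using pi3 xx by (intro mult_right_mono) auto
      ultimately show ?thesis using sq by linarith
    qed
    have lhs: "(exp (- pi * x\<^sup>2) * \<bar>x\<bar> ^ k * exp (2 * pi * R * \<bar>x\<bar>))\<^sup>2
        = exp (- 2 * pi * x\<^sup>2 + 4 * pi * R * \<bar>x\<bar>) * \<bar>x\<bar> ^ (2*k)"
      apply (simp add: power2_eq_square exp_add[symmetric] power_add[symmetric] mult_ac mult_2 algebra_simps)
      by (metis mult_2_right)
    have rhs: "(exp (4 * pi\<^sup>2 * R\<^sup>2) * sqrt (2 * pi)) * (std_normal_density x * \<bar>x\<bar> ^ (2*k))
        = exp (4 * pi\<^sup>2 * R\<^sup>2 + - x\<^sup>2 / 2) * \<bar>x\<bar> ^ (2*k)"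
      proof -
        have e: "exp (4 * pi\<^sup>2 * R\<^sup>2 + - x\<^sup>2 / 2) = exp (4 * pi\<^sup>2 * R\<^sup>2) * exp (- (x\<^sup>2 / 2))"
          by (simp add: exp_add[symmetric])
        show ?thesis unfolding e by (simp add: std_normal_density_def)
      qed
    have "exp (- 2 * pi * x\<^sup>2 + 4 * pi * R * \<bar>x\<bar>) \<le> exp (4 * pi\<^sup>2 * R\<^sup>2 + - x\<^sup>2 / 2)"
      using ineq by simp
    then have "exp (- 2 * pi * x\<^sup>2 + 4 * pi * R * \<bar>x\<bar>) * \<bar>x\<bar> ^ (2*k) \<le> exp (4 * pi\<^sup>2 * R\<^sup>2 + - x\<^sup>2 / 2) * \<bar>x\<bar> ^ (2*k)"
      by (intro mult_right_mono) auto
    then show "norm ((exp (- pi * x\<^sup>2) * \<bar>x\<bar> ^ k * exp (2 * pi * R * \<bar>x\<bar>))\<^sup>2)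
          \<le> norm ((exp (4 * pi\<^sup>2 * R\<^sup>2) * sqrt (2 * pi)) * (std_normal_density x * \<bar>x\<bar> ^ (2*k)))"
      unfolding lhs rhs by simp
  qed
qed

lemma weight_int:
  fixes \<phi> :: "real \<Rightarrow> complex"
  assumes m: "\<phi> \<in> borel_measurable lborel" and sq: "integrable lborel (\<lambda>x. (norm (\<phi> x))\<^sup>2)"
    and R: "R \<ge> 0"
  shows "integrable lborel (\<lambda>x. norm (\<phi> x) * (exp (- pi * x\<^sup>2) * \<bar>x\<bar> ^ k * exp (2 * pi * R * \<bar>x\<bar>)))"
proof (rule Bochner_Integration.integrable_bound)
  let ?w = "\<lambda>x. exp (- pi * x\<^sup>2) * \<bar>x\<bar> ^ k * exp (2 * pi * R * \<bar>x\<bar>)"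
  show "integrable lborel (\<lambda>x. ((norm (\<phi> x))\<^sup>2 + (?w x)\<^sup>2) / 2)"
    using sq gauss_weight_sq_int[OF R, of k] by (intro integrable_divide Bochner_Integration.integrable_add)
  show "(\<lambda>x. norm (\<phi> x) * ?w x) \<in> borel_measurable lborel" using m by measurable
  show "AE x in lborel. norm (norm (\<phi> x) * ?w x) \<le> norm (((norm (\<phi> x))\<^sup>2 + (?w x)\<^sup>2) / 2)"
  proof (rule AE_I2)
    fix x
    have "0 \<le> (norm (\<phi> x) - ?w x)\<^sup>2" by simp
    then have "2 * (norm (\<phi> x) * ?w x) \<le> (norm (\<phi> x))\<^sup>2 + (?w x)\<^sup>2"
      by (simp add: power2_eq_square algebra_simps)
    moreover have "0 \<le> norm (\<phi> x) * ?w x" by simp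
    ultimately show "norm (norm (\<phi> x) * ?w x) \<le> norm (((norm (\<phi> x))\<^sup>2 + (?w x)\<^sup>2) / 2)"
      by simp
  qed
qed

definition good :: "(real \<Rightarrow> complex) \<Rightarrow> bool" where
  "good f \<longleftrightarrow> f \<in> borel_measurable lborel \<and>
     (\<forall>R\<ge>0. \<forall>k. integrable lborel (\<lambda>x. norm (f x) * (\<bar>x\<bar> ^ k * exp (2 * pi * R * \<bar>x\<bar>))))"

lemma good_gamma1:
  fixes \<phi> :: "real \<Rightarrow> complex"
  assumes m: "\<phi> \<in> borel_measurable lborel" and sq: "integrable lborel (\<lambda>x. (norm (\<phi> x))\<^sup>2)"
  shows "good (\<lambda>x. complex_of_real (gamma1 x) * \<phi> x)"
  unfolding good_def
proof (intro conjI allI impI)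
  show "(\<lambda>x. complex_of_real (gamma1 x) * \<phi> x) \<in> borel_measurable lborel"
    using m unfolding gamma1_def by measurable
  fix R :: real and k :: nat assume R: "R \<ge> 0"
  show "integrable lborel (\<lambda>x. norm (complex_of_real (gamma1 x) * \<phi> x) * (\<bar>x\<bar> ^ k * exp (2 * pi * R * \<bar>x\<bar>)))"
    using weight_int[OF m sq R, of k]
    by (simp add: gamma1_def norm_mult mult_ac)
qed

definition LT :: "(real \<Rightarrow> complex) \<Rightarrow> complex \<Rightarrow> complex" where
  "LT f z = (\<integral>x. f x * exp (- (2 * pi * \<i>) * of_real x * z) \<partial>lborel)"

lemma norm_kernel_le:
  "norm (exp (- (2 * pi * \<i>) * of_real x * z)) \<le> exp (2 * pi * norm z * \<bar>x\<bar>)"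
proof -
  have "Re (- (2 * pi * \<i>) * of_real x * z) = 2 * pi * (x * Im z)" by simp
  also have "\<dots> \<le> 2 * pi * (norm z * \<bar>x\<bar>)"
  proof -
    have "x * Im z \<le> \<bar>x\<bar> * \<bar>Im z\<bar>" by (metis abs_ge_self abs_mult)
    also have "\<dots> \<le> \<bar>x\<bar> * norm z" by (intro mult_left_mono abs_Im_le_cmod) auto
    finally show ?thesis by (simp add: mult_ac)
  qed
  finally show ?thesis by (simp add: mult_ac)
qed

lemma good_measurable: "good f \<Longrightarrow> f \<in> borel_measurable lborel"
  by (simp add: good_def)

lemma good_intD: "good f \<Longrightarrow> R \<ge> 0 \<Longrightarrow>
   integrable lborel (\<lambda>x. norm (f x) * (\<bar>x\<bar> ^ k * exp (2 * pi * R * \<bar>x\<bar>)))"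
  by (simp add: good_def)

lemma good_integrable:
  assumes g: "good f"
  shows "integrable lborel (\<lambda>x. f x * exp (- (2 * pi * \<i>) * of_real x * z))"
proof (rule Bochner_Integration.integrable_bound)
  show "integrable lborel (\<lambda>x. norm (f x) * (\<bar>x\<bar> ^ 0 * exp (2 * pi * norm z * \<bar>x\<bar>)))"
    using good_intD[OF g, of "norm z" 0] by simp
  show "(\<lambda>x. f x * exp (- (2 * pi * \<i>) * of_real x * z)) \<in> borel_measurable lborel"
    using good_measurable[OF g] by measurable
  show "AE x in lborel. norm (f x * exp (- (2 * pi * \<i>) * of_real x * z))
      \<le> norm (norm (f x) * (\<bar>x\<bar> ^ 0 * exp (2 * pi * norm z * \<bar>x\<bar>)))"
    by (intro AE_I2) (simp add: norm_mult mult_left_mono norm_kernel_le[simplified])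
qed

lemma good_mult:
  assumes g: "good f"
  shows "good (\<lambda>x. c * of_real x * f x)"
  unfolding good_def
proof (intro conjI allI impI)
  show "(\<lambda>x. c * of_real x * f x) \<in> borel_measurable lborel"
    using good_measurable[OF g] by measurable
  fix R :: real and k :: nat assume R: "R \<ge> 0"
  have "integrable lborel (\<lambda>x. norm c * (norm (f x) * (\<bar>x\<bar> ^ Suc k * exp (2 * pi * R * \<bar>x\<bar>))))"
    using good_intD[OF g R, of "Suc k"] by (rule integrable_mult_right)
  then show "integrable lborel (\<lambda>x. norm (c * of_real x * f x) * (\<bar>x\<bar> ^ k * exp (2 * pi * R * \<bar>x\<bar>)))"
    by (simp add: norm_mult mult_ac)
qed

lemma good_cmult:
  assumes g: "good f"
  shows "good (\<lambda>x. c * f x)"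
  unfolding good_def
proof (intro conjI allI impI)
  show "(\<lambda>x. c * f x) \<in> borel_measurable lborel"
    using good_measurable[OF g] by measurable
  fix R :: real and k :: nat assume R: "R \<ge> 0"
  have "integrable lborel (\<lambda>x. norm c * (norm (f x) * (\<bar>x\<bar> ^ k * exp (2 * pi * R * \<bar>x\<bar>))))"
    using good_intD[OF g R, of k] by (rule integrable_mult_right)
  then show "integrable lborel (\<lambda>x. norm (c * f x) * (\<bar>x\<bar> ^ k * exp (2 * pi * R * \<bar>x\<bar>)))"
    by (simp add: norm_mult mult_ac)
qed

lemma good_diff:
  assumes g: "good f" and g': "good g"
  shows "good (\<lambda>x. f x - g x)"
  unfolding good_def
proof (intro conjI allI impI)
  show "(\<lambda>x. f x - g x) \<in> borel_measurable lborel"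
    using good_measurable[OF g] good_measurable[OF g'] by measurable
  fix R :: real and k :: nat assume R: "R \<ge> 0"
  show "integrable lborel (\<lambda>x. norm (f x - g x) * (\<bar>x\<bar> ^ k * exp (2 * pi * R * \<bar>x\<bar>)))"
  proof (rule Bochner_Integration.integrable_bound)
    show "integrable lborel (\<lambda>x. norm (f x) * (\<bar>x\<bar> ^ k * exp (2 * pi * R * \<bar>x\<bar>)) + norm (g x) * (\<bar>x\<bar> ^ k * exp (2 * pi * R * \<bar>x\<bar>)))"
      using good_intD[OF g R, of k] good_intD[OF g' R, of k] by (rule Bochner_Integration.integrable_add)
    show "(\<lambda>x. norm (f x - g x) * (\<bar>x\<bar> ^ k * exp (2 * pi * R * \<bar>x\<bar>))) \<in> borel_measurable lborel"
      using good_measurable[OF g] good_measurable[OF g'] by measurable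
    show "AE x in lborel. norm (norm (f x - g x) * (\<bar>x\<bar> ^ k * exp (2 * pi * R * \<bar>x\<bar>)))
       \<le> norm (norm (f x) * (\<bar>x\<bar> ^ k * exp (2 * pi * R * \<bar>x\<bar>)) + norm (g x) * (\<bar>x\<bar> ^ k * exp (2 * pi * R * \<bar>x\<bar>)))"
    proof (rule AE_I2)
      fix x
      have "norm (f x - g x) * (\<bar>x\<bar> ^ k * exp (2 * pi * R * \<bar>x\<bar>)) \<le> (norm (f x) + norm (g x)) * (\<bar>x\<bar> ^ k * exp (2 * pi * R * \<bar>x\<bar>))"
        by (intro mult_right_mono norm_triangle_ineq4) auto
      then show "norm (norm (f x - g x) * (\<bar>x\<bar> ^ k * exp (2 * pi * R * \<bar>x\<bar>)))
       \<le> norm (norm (f x) * (\<bar>x\<bar> ^ k * exp (2 * pi * R * \<bar>x\<bar>)) + norm (g x) * (\<bar>x\<bar> ^ k * exp (2 * pi * R * \<bar>x\<bar>)))"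
        by (simp add: algebra_simps)
    qed
  qed
qed

lemma LT_deriv:
  assumes g: "good f"
  shows "(LT f has_field_derivative LT (\<lambda>x. - (2 * pi * \<i>) * of_real x * f x) z) (at z)"
proof -
  define a where "a = (\<lambda>x::real. - (2 * pi * \<i>) * of_real x)"
  define f1 where "f1 = (\<lambda>x. - (2 * pi * \<i>) * of_real x * f x)"
  have g1: "good f1" unfolding f1_def by (rule good_mult[OF g])
  define C where "C = (\<integral>x. norm (f x) * (\<bar>x\<bar> ^ 2 * exp (2 * pi * (norm z + 1) * \<bar>x\<bar>)) \<partial>lborel)"
  have intC: "integrable lborel (\<lambda>x. norm (f x) * (\<bar>x\<bar> ^ 2 * exp (2 * pi * (norm z + 1) * \<bar>x\<bar>)))"
    by (rule good_intD[OF g]) simp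
  have key: "norm ((LT f (z + h) - LT f z) / h - LT f1 z) \<le> norm h * (4 * pi\<^sup>2 * C)"
    if h: "h \<noteq> 0" "norm h \<le> 1" for h
  proof -
    have i0: "integrable lborel (\<lambda>x. f x * exp (a x * z))"
      using good_integrable[OF g, of z] by (simp add: a_def)
    have i1: "integrable lborel (\<lambda>x. f x * exp (a x * (z + h)))"
      using good_integrable[OF g, of "z + h"] by (simp add: a_def mult.assoc)
    have i2: "integrable lborel (\<lambda>x. h * (f1 x * exp (a x * z)))"
      using good_integrable[OF g1, of z] by (simp add: a_def)
    have f1a: "f1 x = a x * f x" for x by (simp add: f1_def a_def)
    have ea: "exp (a x * (z + h)) = exp (a x * z) * exp (a x * h)" for x
      by (simp add: distrib_left exp_add)
    have eqI: "LT f (z + h) - LT f z - h * LT f1 z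
        = (\<integral>x. f x * exp (a x * (z + h)) - f x * exp (a x * z) - h * (f1 x * exp (a x * z)) \<partial>lborel)"
      using i0 i1 i2
      by (simp add: LT_def a_def Bochner_Integration.integral_diff mult.assoc)
    also have "\<dots> = (\<integral>x. f x * exp (a x * z) * (exp (a x * h) - 1 - a x * h) \<partial>lborel)"
      by (intro Bochner_Integration.integral_cong refl)
         (simp only: ea f1a, simp add: algebra_simps)
    finally have eqI' : "LT f (z + h) - LT f z - h * LT f1 z = (\<integral>x. f x * exp (a x * z) * (exp (a x * h) - 1 - a x * h) \<partial>lborel)" .
    have intR: "integrable lborel (\<lambda>x. f x * exp (a x * z) * (exp (a x * h) - 1 - a x * h))"
    proof -
      have "integrable lborel (\<lambda>x. f x * exp (a x * (z + h)) - f x * exp (a x * z) - h * (f1 x * exp (a x * z)))"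
        using i0 i1 i2 by (intro Bochner_Integration.integrable_diff)
      then show ?thesis
        by (rule Bochner_Integration.integrable_cong[THEN iffD1, rotated 2])
           (simp_all only: ea f1a, simp add: algebra_simps)
    qed
    have pw: "norm (f x * exp (a x * z) * (exp (a x * h) - 1 - a x * h))
        \<le> (norm h)\<^sup>2 * (4 * pi\<^sup>2) * (norm (f x) * (\<bar>x\<bar> ^ 2 * exp (2 * pi * (norm z + 1) * \<bar>x\<bar>)))" for x
    proof -
      have n1: "norm (exp (a x * z)) \<le> exp (2 * pi * norm z * \<bar>x\<bar>)"
        using norm_kernel_le[of x z] by (simp add: a_def)
      have nah: "norm (a x * h) = 2 * pi * \<bar>x\<bar> * norm h"
        by (simp add: a_def norm_mult)
      have n2: "norm (exp (a x * h) - 1 - a x * h) \<le> (2 * pi * \<bar>x\<bar> * norm h)\<^sup>2 * exp (2 * pi * \<bar>x\<bar>)"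
      proof -
        have "norm (exp (a x * h) - 1 - a x * h) \<le> (norm (a x * h))\<^sup>2 * exp (norm (a x * h))"
          by (rule exp_rem_bound)
        also have "\<dots> \<le> (2 * pi * \<bar>x\<bar> * norm h)\<^sup>2 * exp (2 * pi * \<bar>x\<bar>)"
          unfolding nah using h(2) by (intro mult_left_mono) (auto intro!: mult_left_le)
        finally show ?thesis .
      qed
      have "norm (f x * exp (a x * z) * (exp (a x * h) - 1 - a x * h))
          = norm (f x) * norm (exp (a x * z)) * norm (exp (a x * h) - 1 - a x * h)"
        by (simp add: norm_mult)
      also have "\<dots> \<le> norm (f x) * exp (2 * pi * norm z * \<bar>x\<bar>) * ((2 * pi * \<bar>x\<bar> * norm h)\<^sup>2 * exp (2 * pi * \<bar>x\<bar>))"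
        using n1 n2 by (intro mult_mono) auto
      also have "\<dots> = (norm h)\<^sup>2 * (4 * pi\<^sup>2) * (norm (f x) * (\<bar>x\<bar> ^ 2 * (exp (2 * pi * norm z * \<bar>x\<bar>) * exp (2 * pi * \<bar>x\<bar>))))"
        by (simp add: power2_eq_square mult_ac)
      also have "exp (2 * pi * norm z * \<bar>x\<bar>) * exp (2 * pi * \<bar>x\<bar>) = exp (2 * pi * (norm z + 1) * \<bar>x\<bar>)"
        by (simp add: exp_add[symmetric] algebra_simps)
      finally show ?thesis .
    qed
    have "norm (LT f (z + h) - LT f z - h * LT f1 z) \<le> (\<integral>x. norm (f x * exp (a x * z) * (exp (a x * h) - 1 - a x * h)) \<partial>lborel)"
      unfolding eqI' by (rule integral_norm_bound)
    also have "\<dots> \<le> (\<integral>x. (norm h)\<^sup>2 * (4 * pi\<^sup>2) * (norm (f x) * (\<bar>x\<bar> ^ 2 * exp (2 * pi * (norm z + 1) * \<bar>x\<bar>))) \<partial>lborel)"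
      using intR intC pw by (intro integral_mono integrable_norm integrable_mult_right) auto
    also have "\<dots> = (norm h)\<^sup>2 * (4 * pi\<^sup>2 * C)"
      by (simp add: C_def)
    finally have b: "norm (LT f (z + h) - LT f z - h * LT f1 z) \<le> (norm h)\<^sup>2 * (4 * pi\<^sup>2 * C)" .
    have "(LT f (z + h) - LT f z) / h - LT f1 z = (LT f (z + h) - LT f z - h * LT f1 z) / h"
      using h(1) by (simp add: field_simps)
    then have "norm ((LT f (z + h) - LT f z) / h - LT f1 z) = norm (LT f (z + h) - LT f z - h * LT f1 z) / norm h"
      by (simp add: norm_divide)
    also have "\<dots> \<le> (norm h)\<^sup>2 * (4 * pi\<^sup>2 * C) / norm h"
      using b h(1) by (intro divide_right_mono) auto
    also have "\<dots> = norm h * (4 * pi\<^sup>2 * C)"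
      using h(1) by (simp add: power2_eq_square)
    finally show ?thesis .
  qed
  have "((\<lambda>h. (LT f (z + h) - LT f z) / h - LT f1 z) \<longlongrightarrow> 0) (at 0)"
  proof (rule Lim_null_comparison)
    show "\<forall>\<^sub>F h in at 0. norm ((LT f (z + h) - LT f z) / h - LT f1 z) \<le> norm h * (4 * pi\<^sup>2 * C)"
    proof -
      have "\<forall>\<^sub>F h in at (0::complex). h \<noteq> 0 \<and> norm h < 1"
        using eventually_at[of "\<lambda>h. h \<noteq> 0 \<and> norm h < 1" 0 UNIV]
        by (auto intro!: exI[of _ 1] simp: dist_norm)
      then show ?thesis by eventually_elim (rule key, auto)
    qed
    show "((\<lambda>h. norm h * (4 * pi\<^sup>2 * C)) \<longlongrightarrow> 0) (at 0)"
      by (intro tendsto_eq_intros) auto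
  qed
  then have "((\<lambda>h. (LT f (z + h) - LT f z) / h) \<longlongrightarrow> LT f1 z) (at 0)"
    by (rule LIM_zero_cancel)
  then show ?thesis unfolding f1_def DERIV_def .
qed

lemma density_real_distribution:
  fixes g :: "real \<Rightarrow> real"
  assumes g: "g \<in> borel_measurable lborel" "\<And>x. 0 \<le> g x" "integrable lborel g"
    and one: "(\<integral>x. g x \<partial>lborel) = 1"
  shows "real_distribution (density lborel g)"
proof -
  have "prob_space (density lborel g)"
  proof
    show "emeasure (density lborel g) (space (density lborel g)) = 1"
      using g one by (simp add: emeasure_density nn_integral_eq_integral)
  qed
  then show ?thesis
    by (simp add: real_distribution_def real_distribution_axioms_def)
qed

lemma char_density:
  fixes g :: "real \<Rightarrow> real"
  assumes g: "g \<in> borel_measurable lborel" "\<And>x. 0 \<le> g x"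
  shows "char (density lborel g) t = (\<integral>x. of_real (g x) * iexp (t * x) \<partial>lborel)"
  unfolding char_def using g
  by (subst integral_density) (auto simp: scaleR_conv_of_real)

lemma real_fourier_unique:
  fixes a :: "real \<Rightarrow> real"
  assumes m: "a \<in> borel_measurable lborel" and int: "integrable lborel a"
    and z: "\<And>t. (\<integral>x. of_real (a x) * iexp (t * x) \<partial>lborel) = 0"
  shows "AE x in lborel. a x = 0"
proof -
  define p where "p = (\<lambda>x. max (a x) 0)"
  define n where "n = (\<lambda>x. max (- a x) 0)"
  have pm: "p \<in> borel_measurable lborel" "n \<in> borel_measurable lborel"
    using m unfolding p_def n_def by measurable
  have pint: "integrable lborel p" "integrable lborel n"
    using int unfolding p_def n_def by auto
  have pn: "\<And>x. 0 \<le> p x" "\<And>x. 0 \<le> n x" unfolding p_def n_def by auto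
  have apn: "a x = p x - n x" for x unfolding p_def n_def by auto
  have cint: "integrable lborel (\<lambda>x. of_real (g x) * iexp (t * x))"
    if "g \<in> borel_measurable lborel" "integrable lborel g" for g t
  proof (rule Bochner_Integration.integrable_bound)
    show "integrable lborel g" by fact
    show "(\<lambda>x. complex_of_real (g x) * iexp (t * x)) \<in> borel_measurable lborel"
      using that(1) by measurable
    show "AE x in lborel. norm (complex_of_real (g x) * iexp (t * x)) \<le> norm (g x)"
      by (intro AE_I2) (simp add: norm_mult)
  qed
  have eqt: "(\<integral>x. of_real (p x) * iexp (t * x) \<partial>lborel) = (\<integral>x. of_real (n x) * iexp (t * x) \<partial>lborel)" for t
  proof -
    have "(\<integral>x. of_real (p x) * iexp (t * x) \<partial>lborel) - (\<integral>x. of_real (n x) * iexp (t * x) \<partial>lborel)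
        = (\<integral>x. of_real (p x) * iexp (t * x) - of_real (n x) * iexp (t * x) \<partial>lborel)"
      using cint[OF pm(1) pint(1)] cint[OF pm(2) pint(2)] by (simp add: Bochner_Integration.integral_diff)
    also have "\<dots> = (\<integral>x. of_real (a x) * iexp (t * x) \<partial>lborel)"
      by (intro Bochner_Integration.integral_cong refl) (simp add: apn algebra_simps)
    also have "\<dots> = 0" by (rule z)
    finally show ?thesis by simp
  qed
  have meq: "(\<integral>x. p x \<partial>lborel) = (\<integral>x. n x \<partial>lborel)"
  proof -
    have "complex_of_real (\<integral>x. p x \<partial>lborel) = (\<integral>x. of_real (p x) * iexp (0 * x) \<partial>lborel)"
      by simp
    also have "\<dots> = (\<integral>x. of_real (n x) * iexp (0 * x) \<partial>lborel)" by (rule eqt)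
    also have "\<dots> = complex_of_real (\<integral>x. n x \<partial>lborel)" by simp
    finally show ?thesis by simp
  qed
  define M where "M = (\<integral>x. p x \<partial>lborel)"
  have M0: "M \<ge> 0" unfolding M_def using pn by simp
  have "AE x in lborel. p x = n x"
  proof (cases "M = 0")
    case True
    have "AE x in lborel. p x = 0"
      using True pint pn pm unfolding M_def
      by (subst integral_nonneg_eq_0_iff_AE[symmetric]) auto
    moreover have "AE x in lborel. n x = 0"
      using True pint pn pm meq unfolding M_def
      by (subst integral_nonneg_eq_0_iff_AE[symmetric]) auto
    ultimately show ?thesis by eventually_elim simp
  next
    case False
    then have Mp: "M > 0" using M0 by simp
    define P where "P = (\<lambda>x. p x / M)"
    define N where "N = (\<lambda>x. n x / M)"
    have Pm: "P \<in> borel_measurable lborel" "N \<in> borel_measurable lborel"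
      using pm unfolding P_def N_def by measurable
    have Pn: "\<And>x. 0 \<le> P x" "\<And>x. 0 \<le> N x" using pn Mp unfolding P_def N_def by auto
    have Pint: "integrable lborel P" "integrable lborel N"
      using pint unfolding P_def N_def by auto
    have P1: "(\<integral>x. P x \<partial>lborel) = 1" "(\<integral>x. N x \<partial>lborel) = 1"
      using Mp meq unfolding P_def N_def M_def by auto
    have d1: "real_distribution (density lborel P)" "real_distribution (density lborel N)"
      using density_real_distribution[OF Pm(1) Pn(1) Pint(1) P1(1)]
        density_real_distribution[OF Pm(2) Pn(2) Pint(2) P1(2)] by auto
    have cd: "char (density lborel (\<lambda>x. Q x / M)) t = (\<integral>x. of_real (Q x) * iexp (t * x) \<partial>lborel) / of_real M"
      if "Q \<in> borel_measurable lborel" "\<And>x. 0 \<le> Q x" for Q t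
    proof -
      have "char (density lborel (\<lambda>x. Q x / M)) t = (\<integral>x. of_real (Q x / M) * iexp (t * x) \<partial>lborel)"
        using that Mp by (intro char_density) auto
      also have "\<dots> = (\<integral>x. (of_real (Q x) * iexp (t * x)) / of_real M \<partial>lborel)"
        by (intro Bochner_Integration.integral_cong refl) simp
      also have "\<dots> = (\<integral>x. of_real (Q x) * iexp (t * x) \<partial>lborel) / of_real M"
        by (rule integral_divide_zero)
      finally show ?thesis .
    qed
    have "char (density lborel P) = char (density lborel N)"
    proof
      fix t
      show "char (density lborel P) t = char (density lborel N) t"
        unfolding P_def N_def using cd[OF pm(1) pn(1), of t] cd[OF pm(2) pn(2), of t] eqt[of t]
        by simp
    qed
    then have "density lborel P = density lborel N"
      using d1 by (intro Levy_uniqueness) auto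
    then have "AE x in lborel. ennreal (P x) = ennreal (N x)"
      using Pm by (intro sigma_finite_measure.density_unique[OF sigma_finite_lborel]) auto
    then show ?thesis
    proof eventually_elim
      fix x assume "ennreal (P x) = ennreal (N x)"
      then have "P x = N x" using Pn by (simp add: ennreal_inj)
      then show "p x = n x" using Mp by (simp add: P_def N_def)
    qed
  qed
  then show ?thesis by eventually_elim (simp add: apn)
qed

lemma fourier_unique_lborel:
  fixes h :: "real \<Rightarrow> complex"
  assumes m: "h \<in> borel_measurable lborel" and int: "integrable lborel h"
    and z: "\<And>\<xi>. (\<integral>x. h x * cis (- 2 * pi * x * \<xi>) \<partial>lborel) = 0"
  shows "AE x in lborel. h x = 0"
proof -
  define H where "H = (\<lambda>t. (\<integral>x. h x * iexp (t * x) \<partial>lborel))"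
  have H0: "H t = 0" for t
  proof -
    have "H t = (\<integral>x. h x * cis (- 2 * pi * x * (- t / (2 * pi))) \<partial>lborel)"
      unfolding H_def by (intro Bochner_Integration.integral_cong refl) (simp add: cis_conv_exp mult_ac)
    also have "\<dots> = 0" by (rule z)
    finally show ?thesis .
  qed
  have ih: "integrable lborel (\<lambda>x. h x * iexp (t * x))" for t
  proof (rule Bochner_Integration.integrable_bound)
    show "integrable lborel h" by fact
    show "(\<lambda>x. h x * iexp (t * x)) \<in> borel_measurable lborel" using m by measurable
    show "AE x in lborel. norm (h x * iexp (t * x)) \<le> norm (h x)"
      by (intro AE_I2) (simp add: norm_mult)
  qed
  have cnjH: "(\<integral>x. cnj (h x) * iexp (t * x) \<partial>lborel) = 0" for t
  proof -
    have "(\<integral>x. cnj (h x) * iexp (t * x) \<partial>lborel) = (\<integral>x. cnj (h x * iexp (- t * x)) \<partial>lborel)"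
      by (intro Bochner_Integration.integral_cong refl) (simp add: exp_cnj)
    also have "\<dots> = cnj (H (- t))" unfolding H_def by (rule Bochner_Integration.integral_cnj)
    also have "\<dots> = 0" by (simp add: H0)
    finally show ?thesis .
  qed
  have ich: "integrable lborel (\<lambda>x. cnj (h x) * iexp (t * x))" for t
  proof -
    have "integrable lborel (\<lambda>x. cnj (h x * iexp (- t * x)))" by (rule Bochner_Integration.integrable_cnj[OF ih[of "- t"]])
    then show ?thesis
      by (rule Bochner_Integration.integrable_cong[THEN iffD1, rotated 2]) (simp_all add: exp_cnj)
  qed
  have re: "AE x in lborel. Re (h x) = 0"
  proof (rule real_fourier_unique)
    show "(\<lambda>x. Re (h x)) \<in> borel_measurable lborel" using m by measurable
    show "integrable lborel (\<lambda>x. Re (h x))" using int by auto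
    fix t
    have "(\<integral>x. complex_of_real (Re (h x)) * iexp (t * x) \<partial>lborel)
        = (\<integral>x. (h x * iexp (t * x) + cnj (h x) * iexp (t * x)) / 2 \<partial>lborel)"
      proof (intro Bochner_Integration.integral_cong refl)
        fix x
        have "h x * iexp (t * x) + cnj (h x) * iexp (t * x) = (h x + cnj (h x)) * iexp (t * x)"
          by (simp only: distrib_right)
        then show "complex_of_real (Re (h x)) * iexp (t * x) = (h x * iexp (t * x) + cnj (h x) * iexp (t * x)) / 2"
          by (simp add: complex_add_cnj)
      qed
    also have "\<dots> = (H t + (\<integral>x. cnj (h x) * iexp (t * x) \<partial>lborel)) / 2"
      unfolding H_def using ih[of t] ich[of t]
      by (simp add: integral_divide_zero Bochner_Integration.integral_add)
    also have "\<dots> = 0" by (simp only: H0 cnjH) simp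
    finally show "(\<integral>x. complex_of_real (Re (h x)) * iexp (t * x) \<partial>lborel) = 0" .
  qed
  have im: "AE x in lborel. Im (h x) = 0"
  proof (rule real_fourier_unique)
    show "(\<lambda>x. Im (h x)) \<in> borel_measurable lborel" using m by measurable
    show "integrable lborel (\<lambda>x. Im (h x))" using int by auto
    fix t
    have "(\<integral>x. complex_of_real (Im (h x)) * iexp (t * x) \<partial>lborel)
        = (\<integral>x. (h x * iexp (t * x) - cnj (h x) * iexp (t * x)) / (2 * \<i>) \<partial>lborel)"
      proof (intro Bochner_Integration.integral_cong refl)
        fix x
        have "h x * iexp (t * x) - cnj (h x) * iexp (t * x) = (h x - cnj (h x)) * iexp (t * x)"
          by (simp only: left_diff_distrib)
        then show "complex_of_real (Im (h x)) * iexp (t * x) = (h x * iexp (t * x) - cnj (h x) * iexp (t * x)) / (2 * \<i>)"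
          by (simp add: complex_diff_cnj) (simp add: algebra_simps)
      qed
    also have "\<dots> = (H t - (\<integral>x. cnj (h x) * iexp (t * x) \<partial>lborel)) / (2 * \<i>)"
      unfolding H_def using ih[of t] ich[of t]
      by (simp add: integral_divide_zero Bochner_Integration.integral_diff)
    also have "\<dots> = 0" by (simp only: H0 cnjH) simp
    finally show "(\<integral>x. complex_of_real (Im (h x)) * iexp (t * x) \<partial>lborel) = 0" .
  qed
  from re im show ?thesis by eventually_elim (simp add: complex_eq_iff)
qed

lemma norm_sq_deriv:
  fixes E E' :: "complex \<Rightarrow> complex"
  assumes dE: "\<And>z. (E has_field_derivative E' z) (at z)"
  shows "((\<lambda>t. Re (E (of_real t)) * Re (E (of_real t)) + Im (E (of_real t)) * Im (E (of_real t)))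
     has_real_derivative 2 * Re (E' (of_real t) * cnj (E (of_real t)))) (at t)"
proof -
  have v: "((\<lambda>x. E (of_real x)) has_vector_derivative E' (of_real t)) (at t)"
    by (rule has_vector_derivative_real_field[OF dE])
  have r: "((\<lambda>x. Re (E (of_real x))) has_real_derivative Re (E' (of_real t))) (at t)"
    by (rule has_field_derivative_Re[OF v])
  have i: "((\<lambda>x. Im (E (of_real x))) has_real_derivative Im (E' (of_real t))) (at t)"
    by (rule has_field_derivative_Im[OF v])
  have "((\<lambda>t. Re (E (of_real t)) * Re (E (of_real t)) + Im (E (of_real t)) * Im (E (of_real t)))
     has_real_derivative (Re (E' (of_real t)) * Re (E (of_real t)) + Re (E' (of_real t)) * Re (E (of_real t)))
        + (Im (E' (of_real t)) * Im (E (of_real t)) + Im (E' (of_real t)) * Im (E (of_real t)))) (at t)"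
    by (intro DERIV_add DERIV_mult r i)
  then show ?thesis
    by (rule DERIV_cong) (simp add: algebra_simps)
qed

lemma cnj_prod_zero: "(z::complex) * cnj z = 0 \<Longrightarrow> z = 0"
  by (simp add: complex_norm_square)

lemma core:
  fixes E G E' G' :: "complex \<Rightarrow> complex"
  assumes dE: "\<And>z. (E has_field_derivative E' z) (at z)"
    and dG: "\<And>z. (G has_field_derivative G' z) (at z)"
    and n1: "\<And>t::real. norm (E t) = norm (G t)"
    and n2: "\<And>t::real. norm (E' t) = norm (G' t)"
    and n3: "\<And>t::real. norm (E t - \<i> * E' t) = norm (G t - \<i> * G' t)"
  shows "\<exists>c. norm c = 1 \<and> (\<forall>t::real. G t = c * E t)"
proof -
  have holE: "E holomorphic_on UNIV" using dE
    by (auto simp: holomorphic_on_def field_differentiable_def)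
  have holG: "G holomorphic_on UNIV" using dG
    by (auto simp: holomorphic_on_def field_differentiable_def)
  have E'eq: "E' = deriv E" by (intro ext) (rule DERIV_imp_deriv[OF dE, symmetric])
  have G'eq: "G' = deriv G" by (intro ext) (rule DERIV_imp_deriv[OF dG, symmetric])
  have holE': "E' holomorphic_on UNIV" unfolding E'eq by (rule holomorphic_deriv[OF holE]) simp
  have holG': "G' holomorphic_on UNIV" unfolding G'eq by (rule holomorphic_deriv[OF holG]) simp
  define W where "W = (\<lambda>z. E' z * G z - E z * G' z)"
  have holW: "W holomorphic_on UNIV" unfolding W_def
    by (intro holomorphic_intros holE holG holE' holG')
  have Wreal: "W (of_real t) = 0" for t
  proof -
    define a where "a = E (of_real t)"
    define b where "b = E' (of_real t)"
    define c where "c = G (of_real t)"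
    define d where "d = G' (of_real t)"
    have sq: "of_real ((norm z)\<^sup>2) = z * cnj z" for z :: complex
      by (rule complex_norm_square)
    have h1: "a * cnj a = c * cnj c" using n1[of t] unfolding a_def c_def
      by (metis sq)
    have h2: "b * cnj b = d * cnj d" using n2[of t] unfolding b_def d_def
      by (metis sq)
    have h3: "(a - \<i> * b) * cnj (a - \<i> * b) = (c - \<i> * d) * cnj (c - \<i> * d)"
      using n3[of t] unfolding a_def b_def c_def d_def by (metis sq)
    have h3': "a * cnj b - b * cnj a = c * cnj d - d * cnj c"
    proof -
      have "(a - \<i> * b) * cnj (a - \<i> * b) = a * cnj a + b * cnj b + \<i> * (a * cnj b - b * cnj a)"
        by (simp add: algebra_simps)
      moreover have "(c - \<i> * d) * cnj (c - \<i> * d) = c * cnj c + d * cnj d + \<i> * (c * cnj d - d * cnj c)"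
        by (simp add: algebra_simps)
      ultimately show ?thesis using h1 h2 h3 by simp
    qed
    have imeq: "Im (b * cnj a) = Im (d * cnj c)"
    proof -
      have "b * cnj a - cnj (b * cnj a) = d * cnj c - cnj (d * cnj c)"
        using h3' by (simp add: algebra_simps)
      then have "complex_of_real (2 * Im (b * cnj a)) * \<i> = complex_of_real (2 * Im (d * cnj c)) * \<i>"
        by (simp only: complex_diff_cnj)
      then show ?thesis by (simp only: mult_cancel_right of_real_eq_iff) simp
    qed
    have reeq: "Re (b * cnj a) = Re (d * cnj c)"
    proof -
      define rE where "rE = (\<lambda>t. Re (E (of_real t)) * Re (E (of_real t)) + Im (E (of_real t)) * Im (E (of_real t)))"
      define rG where "rG = (\<lambda>t. Re (G (of_real t)) * Re (G (of_real t)) + Im (G (of_real t)) * Im (G (of_real t)))"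
      have "rE = rG"
      proof
        fix s
        have "rE s = (norm (E (of_real s)))\<^sup>2" unfolding rE_def by (subst cmod_power2) (simp add: power2_eq_square)
        also have "\<dots> = (norm (G (of_real s)))\<^sup>2" using n1[of s] by simp
        also have "\<dots> = rG s" unfolding rG_def by (subst cmod_power2) (simp add: power2_eq_square)
        finally show "rE s = rG s" .
      qed
      have dr1: "(rE has_real_derivative 2 * Re (b * cnj a)) (at t)"
        unfolding rE_def a_def b_def by (rule norm_sq_deriv[OF dE])
      have dr2: "(rG has_real_derivative 2 * Re (d * cnj c)) (at t)"
        unfolding rG_def c_def d_def by (rule norm_sq_deriv[OF dG])
      from dr1 dr2 \<open>rE = rG\<close> have "2 * Re (b * cnj a) = 2 * Re (d * cnj c)"
        using DERIV_unique by metis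
      then show ?thesis by simp
    qed
    have p1: "b * cnj a = d * cnj c" using imeq reeq by (simp add: complex_eq_iff)
    have p2: "a * cnj b = c * cnj d"
    proof -
      have "cnj (b * cnj a) = cnj (d * cnj c)" using p1 by simp
      then show ?thesis by (simp add: mult.commute)
    qed
    have "(b * c - a * d) * cnj (b * c - a * d) = 0"
    proof -
      have e: "(b * c - a * d) * cnj (b * c - a * d)
          = (b * cnj b) * (c * cnj c) - (b * cnj a) * (c * cnj d) - (a * cnj b) * (d * cnj c) + (a * cnj a) * (d * cnj d)"
        by (simp add: algebra_simps)
      show ?thesis unfolding e h2 p1 p2 using h1
        by (simp add: algebra_simps)
    qed
    then have "b * c - a * d = 0" by (rule cnj_prod_zero)
    then show ?thesis unfolding W_def a_def b_def c_def d_def by simp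
  qed
  have Wzero: "W z = 0" for z
  proof (rule analytic_continuation[OF holW open_UNIV connected_UNIV subset_UNIV])
    show "(0::complex) \<in> UNIV" by simp
    show "(0::complex) islimpt range complex_of_real"
      unfolding islimpt_approachable
    proof (intro allI impI)
      fix e :: real assume "e > 0"
      then show "\<exists>x'\<in>range complex_of_real. x' \<noteq> 0 \<and> dist x' 0 < e"
        by (intro bexI[of _ "of_real (e/2)"] rangeI) auto
    qed
    show "W z = 0" if "z \<in> range complex_of_real" for z using that Wreal by auto
  qed simp
  show ?thesis
  proof (cases "\<forall>t::real. E t = 0")
    case True
    then have "\<forall>t::real. G t = 0" using n1 by (metis norm_eq_zero)
    then show ?thesis using True by (intro exI[of _ 1]) auto
  next
    case False
    then obtain t0 :: real where t0: "E t0 \<noteq> 0" by auto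
    define z0 where "z0 = complex_of_real t0"
    have "continuous (at z0) E"
      by (rule DERIV_isCont[OF dE])
    then obtain r where r: "r > 0" "\<And>y. dist z0 y < r \<Longrightarrow> E y \<noteq> 0"
      using continuous_at_avoid[of z0 E 0] t0 unfolding z0_def by auto
    have dq: "((\<lambda>z. G z / E z) has_field_derivative 0) (at z within ball z0 r)" if "z \<in> ball z0 r" for z
    proof -
      have Ez: "E z \<noteq> 0" using that r by (simp add: dist_commute)
      have "((\<lambda>z. G z / E z) has_field_derivative (G' z * E z - G z * E' z) / (E z * E z)) (at z)"
        by (rule DERIV_divide[OF dG dE Ez])
      moreover have "G' z * E z - G z * E' z = 0"
        using Wzero[of z] unfolding W_def by (simp add: algebra_simps)
      ultimately have "((\<lambda>z. G z / E z) has_field_derivative 0) (at z)"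
        by (metis div_0)
      then show ?thesis by (rule has_field_derivative_at_within)
    qed
    obtain c where c: "\<And>z. z \<in> ball z0 r \<Longrightarrow> G z / E z = c"
      using has_field_derivative_zero_constant[OF convex_ball dq] by blast
    have H: "G z - c * E z = 0" for z
    proof (rule analytic_continuation[of "\<lambda>z. G z - c * E z" UNIV "ball z0 r" z0])
      show "(\<lambda>z. G z - c * E z) holomorphic_on UNIV" by (intro holomorphic_intros holE holG)
      show "z0 islimpt ball z0 r" using r by (simp add: islimpt_ball)
      fix w assume w: "w \<in> ball z0 r"
      then have "E w \<noteq> 0" using r by (simp add: dist_commute)
      then show "G w - c * E w = 0" using c[OF w] by (simp add: field_simps)
    qed auto
    have "norm (G z0) = norm c * norm (E z0)" using H[of z0] by (simp add: norm_mult)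
    moreover have "norm (G z0) = norm (E z0)" using n1[of t0] unfolding z0_def by simp
    moreover have "norm (E z0) \<noteq> 0" using t0 unfolding z0_def by simp
    ultimately have "norm c = 1" by simp
    then show ?thesis using H by (intro exI[of _ c]) (auto simp: algebra_simps)
  qed
qed

lemma borel_rep:
  fixes \<phi> :: "real \<Rightarrow> complex"
  assumes m: "\<phi> \<in> borel_measurable lebesgue"
  shows "\<exists>\<phi>'. \<phi>' \<in> borel_measurable lborel \<and> (AE x in lborel. \<phi> x = \<phi>' x)"
proof -
  have mr: "(\<lambda>x. Re (\<phi> x)) \<in> borel_measurable lebesgue" and mi: "(\<lambda>x. Im (\<phi> x)) \<in> borel_measurable lebesgue"
    using borel_measurable_complex_iff[THEN iffD1, OF m] by auto
  obtain r where r: "r \<in> borel_measurable lborel" "AE x in lborel. Re (\<phi> x) = r x"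
    using completion_ex_borel_measurable_real[OF mr] by blast
  obtain i where i: "i \<in> borel_measurable lborel" "AE x in lborel. Im (\<phi> x) = i x"
    using completion_ex_borel_measurable_real[OF mi] by blast
  show ?thesis
  proof (intro exI conjI)
    show "(\<lambda>x. Complex (r x) (i x)) \<in> borel_measurable lborel" using r(1) i(1) by (simp add: borel_measurable_complex_iff)
    from r(2) i(2) show "AE x in lborel. \<phi> x = Complex (r x) (i x)"
      by eventually_elim (simp add: complex_eq_iff)
  qed
qed

lemma LT_real: "LT u (of_real \<xi>) = (\<integral>x. u x * cis (- 2 * pi * x * \<xi>) \<partial>lborel)"
  unfolding LT_def
  by (intro Bochner_Integration.integral_cong refl) (simp add: cis_conv_exp mult_ac)

lemma cis_measurable[measurable]: "cis \<in> borel_measurable borel"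
  by (rule borel_measurable_continuous_onI, rule continuous_on_cis[OF continuous_on_id])

lemma fourier_eq_LT:
  fixes \<phi> \<phi>' u :: "real \<Rightarrow> complex" and g :: "real \<Rightarrow> real"
  assumes m: "\<phi> \<in> borel_measurable lebesgue" and m': "\<phi>' \<in> borel_measurable lborel"
    and ae: "AE x in lborel. \<phi> x = \<phi>' x"
    and gm: "g \<in> borel_measurable borel"
    and u: "\<And>x. complex_of_real (g x) * \<phi>' x = u x"
  shows "fourier (\<lambda>t. complex_of_real (g t) * \<phi> t) \<xi> = LT u (of_real \<xi>)"
proof -
  have "fourier (\<lambda>t. complex_of_real (g t) * \<phi> t) \<xi>
      = (\<integral>x. complex_of_real (g x) * \<phi> x * cis (- 2 * pi * x * \<xi>) \<partial>lebesgue)"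
    unfolding fourier_def ..
  also have "\<dots> = (\<integral>x. complex_of_real (g x) * \<phi>' x * cis (- 2 * pi * x * \<xi>) \<partial>lebesgue)"
  proof (rule integral_cong_AE)
    have k1: "(\<lambda>x. complex_of_real (g x)) \<in> borel_measurable lborel"
      using gm by measurable
    have k2: "(\<lambda>x. cis (- 2 * pi * x * \<xi>)) \<in> borel_measurable lborel"
      by measurable
    have k1': "(\<lambda>x. complex_of_real (g x)) \<in> borel_measurable lebesgue"
      by (rule measurable_completion[OF k1])
    have k2': "(\<lambda>x. cis (- 2 * pi * x * \<xi>)) \<in> borel_measurable lebesgue"
      by (rule measurable_completion[OF k2])
    have m2: "\<phi>' \<in> borel_measurable lebesgue" by (rule measurable_completion[OF m'])
    show "(\<lambda>x. complex_of_real (g x) * \<phi> x * cis (- 2 * pi * x * \<xi>)) \<in> borel_measurable lebesgue"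
      by (rule borel_measurable_times[OF borel_measurable_times[OF k1' m] k2'])
    show "(\<lambda>x. complex_of_real (g x) * \<phi>' x * cis (- 2 * pi * x * \<xi>)) \<in> borel_measurable lebesgue"
      by (rule borel_measurable_times[OF borel_measurable_times[OF k1' m2] k2'])
    show "AE x in lebesgue. complex_of_real (g x) * \<phi> x * cis (- 2 * pi * x * \<xi>)
        = complex_of_real (g x) * \<phi>' x * cis (- 2 * pi * x * \<xi>)"
      using AE_completion[OF ae] by eventually_elim (simp only:)
  qed
  also have "\<dots> = (\<integral>x. complex_of_real (g x) * \<phi>' x * cis (- 2 * pi * x * \<xi>) \<partial>lborel)"
  proof (rule integral_completion)
    have k1: "(\<lambda>x. complex_of_real (g x)) \<in> borel_measurable lborel"
      using gm by measurable
    have k2: "(\<lambda>x. cis (- 2 * pi * x * \<xi>)) \<in> borel_measurable lborel"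
      by measurable
    show "(\<lambda>x. complex_of_real (g x) * \<phi>' x * cis (- 2 * pi * x * \<xi>)) \<in> borel_measurable lborel"
      by (rule borel_measurable_times[OF borel_measurable_times[OF k1 m'] k2])
  qed
  also have "\<dots> = LT u (of_real \<xi>)"
    unfolding LT_real by (simp only: u)
  finally show ?thesis .
qed

lemma gamma_meas: "gamma1 \<in> borel_measurable borel" "gamma2 \<in> borel_measurable borel"
  "gamma3 \<in> borel_measurable borel"
  unfolding gamma1_def[abs_def] gamma2_def[abs_def] gamma3_def[abs_def]
  by (intro borel_measurable_continuous_onI continuous_intros)+

lemma LT_diff: "good f \<Longrightarrow> good g \<Longrightarrow> LT (\<lambda>x. f x - g x) z = LT f z - LT g z"
  unfolding LT_def
  using good_integrable[of f z] good_integrable[of g z]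
  by (simp add: left_diff_distrib Bochner_Integration.integral_diff)

lemma LT_cmult: "LT (\<lambda>x. c * f x) z = c * LT f z"
  unfolding LT_def by (simp add: mult.assoc)

lemma sq_rep:
  fixes \<phi> :: "real \<Rightarrow> complex"
  assumes "square_integrable \<phi>"
  obtains \<phi>' where "\<phi>' \<in> borel_measurable lborel" "AE x in lborel. \<phi> x = \<phi>' x"
    "integrable lborel (\<lambda>x. (norm (\<phi>' x))\<^sup>2)" "\<phi> \<in> borel_measurable lebesgue"
proof -
  have m: "\<phi> \<in> borel_measurable lebesgue" and i: "integrable lebesgue (\<lambda>x. (norm (\<phi> x))\<^sup>2)"
    using assms unfolding square_integrable_def by auto
  obtain \<phi>' where m': "\<phi>' \<in> borel_measurable lborel" and ae: "AE x in lborel. \<phi> x = \<phi>' x"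
    using borel_rep[OF m] by blast
  have n': "(\<lambda>x. (norm (\<phi>' x))\<^sup>2) \<in> borel_measurable lborel"
    using m' by measurable
  have "integrable lebesgue (\<lambda>x. (norm (\<phi>' x))\<^sup>2)"
  proof (rule integrable_cong_AE[THEN iffD1, OF _ _ _ i])
    show "(\<lambda>x. (norm (\<phi> x))\<^sup>2) \<in> borel_measurable lebesgue"
      by (intro borel_measurable_power measurable_compose[OF m borel_measurable_norm])
    show "(\<lambda>x. (norm (\<phi>' x))\<^sup>2) \<in> borel_measurable lebesgue"
      by (rule measurable_completion[OF n'])
    show "AE x in lebesgue. (norm (\<phi> x))\<^sup>2 = (norm (\<phi>' x))\<^sup>2"
      using AE_completion[OF ae] by eventually_elim (simp only:)
  qed
  then have "integrable lborel (\<lambda>x. (norm (\<phi>' x))\<^sup>2)"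
    using integrable_completion[OF n'] by simp
  then show ?thesis using that m' ae m by blast
qed

theorem mainTheorem2:
  fixes \<phi> \<psi> :: "real \<Rightarrow> complex"
  assumes "square_integrable \<phi>" and "square_integrable \<psi>"
    and "\<forall>\<xi>. norm (fourier (\<lambda>t. complex_of_real (gamma1 t) * \<phi> t) \<xi>)
              = norm (fourier (\<lambda>t. complex_of_real (gamma1 t) * \<psi> t) \<xi>)"
    and "\<forall>\<xi>. norm (fourier (\<lambda>t. complex_of_real (gamma2 t) * \<phi> t) \<xi>)
              = norm (fourier (\<lambda>t. complex_of_real (gamma2 t) * \<psi> t) \<xi>)"
    and "\<forall>\<xi>. norm (fourier (\<lambda>t. complex_of_real (gamma3 t) * \<phi> t) \<xi>)
              = norm (fourier (\<lambda>t. complex_of_real (gamma3 t) * \<psi> t) \<xi>)"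
  shows "\<exists>c::complex. norm c = 1 \<and> (AE x in lebesgue. \<psi> x = c * \<phi> x)"
proof -
  obtain \<phi>' where p1: "\<phi>' \<in> borel_measurable lborel" and p2: "AE x in lborel. \<phi> x = \<phi>' x"
    and p3: "integrable lborel (\<lambda>x. (norm (\<phi>' x))\<^sup>2)" and p4: "\<phi> \<in> borel_measurable lebesgue"
    using sq_rep[OF assms(1)] by blast
  obtain \<psi>' where q1: "\<psi>' \<in> borel_measurable lborel" and q2: "AE x in lborel. \<psi> x = \<psi>' x"
    and q3: "integrable lborel (\<lambda>x. (norm (\<psi>' x))\<^sup>2)" and q4: "\<psi> \<in> borel_measurable lebesgue"
    using sq_rep[OF assms(2)] by blast
  define f where "f = (\<lambda>x. complex_of_real (gamma1 x) * \<phi>' x)"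
  define g where "g = (\<lambda>x. complex_of_real (gamma1 x) * \<psi>' x)"
  define f2 where "f2 = (\<lambda>x. complex_of_real (2 * pi) * of_real x * f x)"
  define g2 where "g2 = (\<lambda>x. complex_of_real (2 * pi) * of_real x * g x)"
  define f3 where "f3 = (\<lambda>x. f x - f2 x)"
  define g3 where "g3 = (\<lambda>x. g x - g2 x)"
  have gf: "good f" unfolding f_def by (rule good_gamma1[OF p1 p3])
  have gg: "good g" unfolding g_def by (rule good_gamma1[OF q1 q3])
  have gf2: "good f2" unfolding f2_def by (rule good_mult[OF gf])
  have gg2: "good g2" unfolding g2_def by (rule good_mult[OF gg])
  have e2: "complex_of_real (gamma2 x) * \<phi>' x = f2 x" "complex_of_real (gamma2 x) * \<psi>' x = g2 x" for x
    unfolding f2_def g2_def f_def g_def gamma2_def gamma1_def by (simp_all add: mult_ac)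
  have e3: "complex_of_real (gamma3 x) * \<phi>' x = f3 x" "complex_of_real (gamma3 x) * \<psi>' x = g3 x" for x
    unfolding f3_def g3_def f2_def g2_def f_def g_def gamma3_def gamma1_def by (simp_all add: algebra_simps)
  have F1: "fourier (\<lambda>t. complex_of_real (gamma1 t) * \<phi> t) \<xi> = LT f (of_real \<xi>)"
    "fourier (\<lambda>t. complex_of_real (gamma1 t) * \<psi> t) \<xi> = LT g (of_real \<xi>)" for \<xi>
    using fourier_eq_LT[OF p4 p1 p2 gamma_meas(1), of f] fourier_eq_LT[OF q4 q1 q2 gamma_meas(1), of g]
    unfolding f_def g_def by auto
  have F2: "fourier (\<lambda>t. complex_of_real (gamma2 t) * \<phi> t) \<xi> = LT f2 (of_real \<xi>)"
    "fourier (\<lambda>t. complex_of_real (gamma2 t) * \<psi> t) \<xi> = LT g2 (of_real \<xi>)" for \<xi>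
    using fourier_eq_LT[OF p4 p1 p2 gamma_meas(2) e2(1)] fourier_eq_LT[OF q4 q1 q2 gamma_meas(2) e2(2)]
    by auto
  have F3: "fourier (\<lambda>t. complex_of_real (gamma3 t) * \<phi> t) \<xi> = LT f3 (of_real \<xi>)"
    "fourier (\<lambda>t. complex_of_real (gamma3 t) * \<psi> t) \<xi> = LT g3 (of_real \<xi>)" for \<xi>
    using fourier_eq_LT[OF p4 p1 p2 gamma_meas(3) e3(1)] fourier_eq_LT[OF q4 q1 q2 gamma_meas(3) e3(2)]
    by auto
  define E' where "E' = LT (\<lambda>x. - (2 * pi * \<i>) * of_real x * f x)"
  define G' where "G' = LT (\<lambda>x. - (2 * pi * \<i>) * of_real x * g x)"
  have dE: "(LT f has_field_derivative E' z) (at z)" for z unfolding E'_def by (rule LT_deriv[OF gf])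
  have dG: "(LT g has_field_derivative G' z) (at z)" for z unfolding G'_def by (rule LT_deriv[OF gg])
  have E'2: "E' z = - \<i> * LT f2 z" for z
  proof -
    have "E' z = LT (\<lambda>x. (- \<i>) * f2 x) z"
      unfolding E'_def f2_def by (intro arg_cong2[where f=LT] ext refl) (simp add: mult_ac)
    then show ?thesis by (simp only: LT_cmult)
  qed
  have G'2: "G' z = - \<i> * LT g2 z" for z
  proof -
    have "G' z = LT (\<lambda>x. (- \<i>) * g2 x) z"
      unfolding G'_def g2_def by (intro arg_cong2[where f=LT] ext refl) (simp add: mult_ac)
    then show ?thesis by (simp only: LT_cmult)
  qed
  have L3f: "LT f3 z = LT f z - LT f2 z" for z unfolding f3_def by (rule LT_diff[OF gf gf2])
  have L3g: "LT g3 z = LT g z - LT g2 z" for z unfolding g3_def by (rule LT_diff[OF gg gg2])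
  have n1: "norm (LT f (of_real t)) = norm (LT g (of_real t))" for t
    using assms(3) F1 by metis
  have n2: "norm (E' (of_real t)) = norm (G' (of_real t))" for t
    using assms(4) F2 unfolding E'2 G'2 by (simp add: norm_mult)
  have n3: "norm (LT f (of_real t) - \<i> * E' (of_real t)) = norm (LT g (of_real t) - \<i> * G' (of_real t))" for t
  proof -
    have "LT f (of_real t) - \<i> * E' (of_real t) = LT f3 (of_real t)" unfolding E'2 L3f by simp
    moreover have "LT g (of_real t) - \<i> * G' (of_real t) = LT g3 (of_real t)" unfolding G'2 L3g by simp
    ultimately show ?thesis using assms(5) F3 by metis
  qed
  obtain c where c1: "norm c = 1" and c2: "\<And>t::real. LT g (of_real t) = c * LT f (of_real t)"
    using core[OF dE dG n1 n2 n3] by blast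
  define h where "h = (\<lambda>x. g x - c * f x)"
  have gcf: "good (\<lambda>x. c * f x)" by (rule good_cmult[OF gf])
  have gh: "good h" unfolding h_def by (rule good_diff[OF gg gcf])
  have hm: "h \<in> borel_measurable lborel" by (rule good_measurable[OF gh])
  have hi: "integrable lborel h" using good_integrable[OF gh, of 0] by simp
  have hz: "(\<integral>x. h x * cis (- 2 * pi * x * \<xi>) \<partial>lborel) = 0" for \<xi>
  proof -
    have "(\<integral>x. h x * cis (- 2 * pi * x * \<xi>) \<partial>lborel) = LT h (of_real \<xi>)" by (simp add: LT_real)
    also have "\<dots> = LT g (of_real \<xi>) - c * LT f (of_real \<xi>)"
      unfolding h_def by (simp add: LT_diff[OF gg gcf] LT_cmult)
    also have "\<dots> = 0" using c2[of \<xi>] by simp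
    finally show ?thesis .
  qed
  have aeh: "AE x in lborel. h x = 0" by (rule fourier_unique_lborel[OF hm hi hz])
  have "AE x in lborel. \<psi> x = c * \<phi> x"
    using aeh p2 q2
  proof eventually_elim
    fix x assume h0: "h x = 0" and px: "\<phi> x = \<phi>' x" and qx: "\<psi> x = \<psi>' x"
    have "complex_of_real (gamma1 x) * (\<psi>' x - c * \<phi>' x) = 0"
      using h0 unfolding h_def f_def g_def by (simp add: algebra_simps)
    moreover have "gamma1 x \<noteq> 0" by (simp add: gamma1_def)
    ultimately have "\<psi>' x = c * \<phi>' x" by simp
    then show "\<psi> x = c * \<phi> x" using px qx by simp
  qed
  then have "AE x in lebesgue. \<psi> x = c * \<phi> x" by (rule AE_completion)
  then show ?thesis using c1 by blast
qed

end
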